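(* (i) Let $Y\subseteq X$ be metric spaces (with the restricted metric) and $x\in Y$. Then $\underline{\delta}_Y(x)\le\underline{\delta}_X(x)$ and $\overline{\delta}_Y(x)\le\overline{\delta}_X(x)$, with equalities if there is $R_0>0$ such that $B_X(x,R_0)\subseteq Y$. (ii) Let $X_1,X_2\subseteq X$ and $x\in X_1\cap X_2$. Then $\underline{\delta}_{X_1\cup X_2}(x)\ge\max\{\underline{\delta}_{X_1}(x),\underline{\delta}_{X_2}(x)\}$ and $\overline{\delta}_{X_1\cup X_2}(x)=\max\{\overline{\delta}_{X_1}(x),\overline{\delta}_{X_2}(x)\}$. (iii) Let $X,Y$ be metric spaces, $x\in X$, $y\in Y$, and endow $X\times Y$ with the product metric. Then $\underline{\delta}_{X\times Y}((x,y))\ge\underline{\delta}_X(x)+\underline{\delta}_Y(y)$ and $\overline{\delta}_{X\times Y}((x,y))\le\overline{\delta}_X(x)+\overline{\delta}_Y(y)$.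
   Context: For a metric space $Z$ and $z\in Z$, with $B_Z(z,r)$ the open ball, $\overline{B}(z,r)$ the closed ball and $n(r,A)$ the minimum number of open balls of radius $r$ needed to cover $A$, the lower and upper tangential dimensions are $\underline{\delta}_Z(z)=\liminf_{\lambda\to0}\liminf_{r\to0}\frac{\log n(\lambda r,\overline{B}(z,r))}{\log1/\lambda}$, $\overline{\delta}_Z(z)=\limsup_{\lambda\to0}\limsup_{r\to0}\frac{\log n(\lambda r,\overline{B}(z,r))}{\log1/\lambda}$ (possibly infinite); for a subset $E$ of a metric space, $\underline{\delta}_E$, $\overline{\delta}_E$ are computed in $E$ with the restricted metric. *)

theory Defs
  imports "HOL-Analysis.Analysis"
begin

text \<open>n(r,A): minimum number of open balls of radius r (centred in the
  space M) covering A; infinity if no finite cover exists.\<close>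
definition cover_num :: "'a set \<Rightarrow> ('a \<Rightarrow> 'a \<Rightarrow> real) \<Rightarrow> real \<Rightarrow> 'a set \<Rightarrow> ereal" where
  "cover_num M d r A =
     (INF C \<in> {C. finite C \<and> C \<subseteq> M \<and> A \<subseteq> (\<Union>c\<in>C. Metric_space.mball M d c r)}.
        ereal (real (card C)))"

definition ln_ext :: "ereal \<Rightarrow> ereal" where
  "ln_ext n = (if n = \<infinity> then \<infinity> else ereal (ln (real_of_ereal n)))"

definition tdim_ratio :: "'a set \<Rightarrow> ('a \<Rightarrow> 'a \<Rightarrow> real) \<Rightarrow> 'a \<Rightarrow> real \<Rightarrow> real \<Rightarrow> ereal" where
  "tdim_ratio M d z lam r =
     ln_ext (cover_num M d (lam * r) (Metric_space.mcball M d z r)) / ereal (ln (1 / lam))"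

definition lower_tdim :: "'a set \<Rightarrow> ('a \<Rightarrow> 'a \<Rightarrow> real) \<Rightarrow> 'a \<Rightarrow> ereal" where
  "lower_tdim M d z =
     Liminf (at_right 0) (\<lambda>lam. Liminf (at_right 0) (\<lambda>r. tdim_ratio M d z lam r))"

definition upper_tdim :: "'a set \<Rightarrow> ('a \<Rightarrow> 'a \<Rightarrow> real) \<Rightarrow> 'a \<Rightarrow> ereal" where
  "upper_tdim M d z =
     Limsup (at_right 0) (\<lambda>lam. Limsup (at_right 0) (\<lambda>r. tdim_ratio M d z lam r))"

end

theory Submission
  imports Defs
begin

definition iscover :: "'a set \<Rightarrow> ('a \<Rightarrow> 'a \<Rightarrow> real) \<Rightarrow> real \<Rightarrow> 'a set \<Rightarrow> 'a set \<Rightarrow> bool" where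
  "iscover M d r A C \<longleftrightarrow> finite C \<and> C \<subseteq> M \<and> A \<subseteq> (\<Union>c\<in>C. Metric_space.mball M d c r)"

lemma cover_num_alt: "cover_num M d r A = (INF C \<in> {C. iscover M d r A C}. ereal (real (card C)))"
  unfolding cover_num_def iscover_def by simp

lemma cover_num_le: "iscover M d r A C \<Longrightarrow> cover_num M d r A \<le> ereal (real (card C))"
  unfolding cover_num_alt by (rule INF_lower) simp

lemma cover_num_none: "\<not> (\<exists>C. iscover M d r A C) \<Longrightarrow> cover_num M d r A = \<infinity>"
proof -
  assume "\<not> (\<exists>C. iscover M d r A C)"
  then have e: "{C. iscover M d r A C} = {}" by blast
  show ?thesis unfolding cover_num_alt e by (simp add: top_ereal_def)
qed

lemma cover_num_opt:
  assumes "\<exists>C. iscover M d r A C"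
  obtains C where "iscover M d r A C" "cover_num M d r A = ereal (real (card C))"
proof -
  define n where "n = (LEAST n. \<exists>C. iscover M d r A C \<and> card C = n)"
  have "\<exists>C. iscover M d r A C \<and> card C = n"
    unfolding n_def using assms by (rule_tac LeastI_ex) blast
  then obtain C0 where C0: "iscover M d r A C0" "card C0 = n" by blast
  have "cover_num M d r A = ereal (real (card C0))"
  proof (rule antisym)
    show "cover_num M d r A \<le> ereal (real (card C0))" using C0(1) by (rule cover_num_le)
    show "ereal (real (card C0)) \<le> cover_num M d r A"
      unfolding cover_num_alt
    proof (rule INF_greatest)
      fix C assume "C \<in> {C. iscover M d r A C}"
      then have "n \<le> card C" unfolding n_def by (auto intro: Least_le)
      then show "ereal (real (card C0)) \<le> ereal (real (card C))" using C0 by simp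
    qed
  qed
  then show ?thesis using C0 that by blast
qed

lemma cover_num_cases:
  obtains (none) "\<not> (\<exists>C. iscover M d r A C)" "cover_num M d r A = \<infinity>"
  | (opt) C where "iscover M d r A C" "cover_num M d r A = ereal (real (card C))"
  using cover_num_none cover_num_opt by metis

lemma cover_num_ge1:
  assumes "A \<noteq> {}" shows "1 \<le> cover_num M d r A"
proof (cases rule: cover_num_cases[of M d r A])
  case none then show ?thesis by simp
next
  case (opt C)
  then have "C \<noteq> {}" "finite C" using assms unfolding iscover_def by auto
  then have "card C \<ge> 1" by (simp add: Suc_leI card_gt_0_iff)
  then show ?thesis using opt by simp
qed

lemma cover_num_mono_set:
  assumes "A \<subseteq> B" shows "cover_num M d r A \<le> cover_num M d r B"
  unfolding cover_num_alt
  by (rule INF_superset_mono) (use assms in \<open>auto simp: iscover_def subset_iff\<close>)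

lemma cover_num_mono_rad:
  assumes "Metric_space M d" "r \<le> s" shows "cover_num M d s A \<le> cover_num M d r A"
  unfolding cover_num_alt
proof (rule INF_superset_mono)
  show "{C. iscover M d r A C} \<subseteq> {C. iscover M d s A C}"
    using assms unfolding iscover_def Metric_space.mball_def[OF assms(1)] by fastforce
qed simp

lemma cover_num_nonneg: "0 \<le> cover_num M d r A"
  unfolding cover_num_alt by (rule INF_greatest) simp

lemma mball_sub_iff:
  assumes "Metric_space X d" "Y \<subseteq> X"
  shows "Metric_space.mball Y d c r = Metric_space.mball X d c r \<inter> {y. c \<in> Y \<and> y \<in> Y}"
  using assms Metric_space.subspace[OF assms]
  by (auto simp: Metric_space.mball_def)

lemma mcball_sub_iff:
  assumes "Metric_space X d" "Y \<subseteq> X" "c \<in> Y"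
  shows "Metric_space.mcball Y d c r = Metric_space.mcball X d c r \<inter> Y"
  using assms Metric_space.subspace[OF assms(1,2)]
  by (auto simp: Metric_space.mcball_def)

lemma cover_sub:
  assumes X: "Metric_space X d" and Y: "Y \<subseteq> X"
  shows "cover_num Y d (2 * s) (A \<inter> Y) \<le> cover_num X d s A"
proof (cases rule: cover_num_cases[of X d s A])
  case none then show ?thesis by simp
next
  case (opt C)
  have MY: "Metric_space Y d" using Metric_space.subspace[OF X Y] .
  define C0 where "C0 = {c\<in>C. Metric_space.mball X d c s \<inter> Y \<noteq> {}}"
  define p where "p c = (SOME y. y \<in> Metric_space.mball X d c s \<inter> Y)" for c
  have p: "p c \<in> Metric_space.mball X d c s \<inter> Y" if "c \<in> C0" for c
    using that unfolding C0_def p_def by (metis (mono_tags, lifting) ex_in_conv mem_Collect_eq someI_ex)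
  have fin: "finite C" "C \<subseteq> X" and cov: "A \<subseteq> (\<Union>c\<in>C. Metric_space.mball X d c s)"
    using opt unfolding iscover_def by auto
  have "iscover Y d (2 * s) (A \<inter> Y) (p ` C0)"
    unfolding iscover_def
  proof (intro conjI)
    show "finite (p ` C0)" using fin unfolding C0_def by auto
    show "p ` C0 \<subseteq> Y" using p by auto
    show "A \<inter> Y \<subseteq> (\<Union>c\<in>p ` C0. Metric_space.mball Y d c (2 * s))"
    proof
      fix a assume a: "a \<in> A \<inter> Y"
      then obtain c where c: "c \<in> C" "a \<in> Metric_space.mball X d c s" using cov by auto
      then have cC0: "c \<in> C0" unfolding C0_def using a by auto
      have pc: "p c \<in> X" "p c \<in> Y" "d c (p c) < s" "c \<in> X"
        using p[OF cC0] by (auto simp: Metric_space.mball_def[OF X])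
      have "a \<in> X" "d c a < s" using c by (auto simp: Metric_space.mball_def[OF X])
      have "d (p c) a \<le> d (p c) c + d c a"
        using Metric_space.triangle[OF X] pc \<open>a \<in> X\<close> by blast
      also have "\<dots> < 2 * s" using pc \<open>d c a < s\<close> Metric_space.commute[OF X, of c "p c"] by linarith
      finally have "a \<in> Metric_space.mball Y d (p c) (2 * s)"
        using pc a by (simp add: Metric_space.mball_def[OF MY])
      then show "a \<in> (\<Union>c\<in>p ` C0. Metric_space.mball Y d c (2 * s))" using cC0 by blast
    qed
  qed
  then have "cover_num Y d (2 * s) (A \<inter> Y) \<le> ereal (real (card (p ` C0)))" by (rule cover_num_le)
  also have "card (p ` C0) \<le> card C"
  proof -
    have "C0 \<subseteq> C" unfolding C0_def by blast
    then have "finite C0" using fin(1) by (rule finite_subset)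
    then have "card (p ` C0) \<le> card C0" by (rule card_image_le)
    also have "card C0 \<le> card C" using \<open>C0 \<subseteq> C\<close> fin by (simp add: card_mono)
    finally show ?thesis .
  qed
  then have "ereal (real (card (p ` C0))) \<le> ereal (real (card C))" by simp
  finally show ?thesis using opt by simp
qed

lemma cover_sup:
  assumes X: "Metric_space X d" and Y: "Y \<subseteq> X"
  shows "cover_num X d s A \<le> cover_num Y d s A"
  unfolding cover_num_alt
proof (rule INF_superset_mono)
  show "{C. iscover Y d s A C} \<subseteq> {C. iscover X d s A C}"
    using Y unfolding iscover_def mball_sub_iff[OF X Y] by blast
qed simp

lemma cover_union:
  assumes U: "Metric_space U d" and "X1 \<subseteq> U" "X2 \<subseteq> U"
  shows "cover_num U d s (A1 \<union> A2) \<le> cover_num X1 d s A1 + cover_num X2 d s A2"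
proof (cases rule: cover_num_cases[of X1 d s A1])
  case none
  have "cover_num X2 d s A2 \<noteq> -\<infinity>" using cover_num_nonneg[of X2 d s A2] by auto
  then show ?thesis using none by simp
next
  case (opt C1)
  note o1 = opt
  show ?thesis
  proof (cases rule: cover_num_cases[of X2 d s A2])
    case none
    have "cover_num X1 d s A1 \<noteq> -\<infinity>" using o1 by auto
    then show ?thesis using none by simp
  next
    case (opt C2)
    note opt2 = opt
    have "iscover U d s (A1 \<union> A2) (C1 \<union> C2)"
    proof -
      have s1: "Metric_space.mball X1 d c s \<subseteq> Metric_space.mball U d c s" for c
        unfolding mball_sub_iff[OF U assms(2)] by blast
      have s2: "Metric_space.mball X2 d c s \<subseteq> Metric_space.mball U d c s" for c
        unfolding mball_sub_iff[OF U assms(3)] by blast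
      have c1: "finite C1" "C1 \<subseteq> X1" "A1 \<subseteq> (\<Union>c\<in>C1. Metric_space.mball X1 d c s)"
        using o1(1) unfolding iscover_def by auto
      have c2: "finite C2" "C2 \<subseteq> X2" "A2 \<subseteq> (\<Union>c\<in>C2. Metric_space.mball X2 d c s)"
        using opt2(1) unfolding iscover_def by auto
      have "A1 \<subseteq> (\<Union>c\<in>C1 \<union> C2. Metric_space.mball U d c s)"
        using c1(3) s1 by fastforce
      moreover have "A2 \<subseteq> (\<Union>c\<in>C1 \<union> C2. Metric_space.mball U d c s)"
        using c2(3) s2 by fastforce
      ultimately show ?thesis using c1 c2 assms(2,3) unfolding iscover_def by auto
    qed
    then have "cover_num U d s (A1 \<union> A2) \<le> ereal (real (card (C1 \<union> C2)))" by (rule cover_num_le)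
    also have "\<dots> \<le> ereal (real (card C1)) + ereal (real (card C2))"
      using card_Un_le[of C1 C2] by simp
    finally show ?thesis using o1 opt2 by simp
  qed
qed

definition sep :: "('a \<Rightarrow> 'a \<Rightarrow> real) \<Rightarrow> real \<Rightarrow> 'a set \<Rightarrow> bool" where
  "sep d e S \<longleftrightarrow> (\<forall>a\<in>S. \<forall>b\<in>S. a \<noteq> b \<longrightarrow> e \<le> d a b)"

lemma pack_le_cover:
  assumes M: "Metric_space M d" and C: "iscover M d r A C"
    and S: "S \<subseteq> A" "finite S" "sep d (2*r) S"
  shows "card S \<le> card C"
proof -
  have cov: "finite C" "\<forall>a\<in>A. \<exists>c\<in>C. a \<in> Metric_space.mball M d c r"
    using C unfolding iscover_def by auto
  define f where "f s = (SOME c. c \<in> C \<and> s \<in> Metric_space.mball M d c r)" for s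
  have f: "f s \<in> C \<and> s \<in> Metric_space.mball M d (f s) r" if "s \<in> S" for s
    unfolding f_def using cov(2) S(1) that by (metis (no_types, lifting) someI_ex subsetD)
  have "inj_on f S"
  proof (rule inj_onI)
    fix s t assume st: "s \<in> S" "t \<in> S" "f s = f t"
    show "s = t"
    proof (rule ccontr)
      assume "s \<noteq> t"
      then have "2*r \<le> d s t" using S(3) st unfolding sep_def by blast
      moreover have "f s \<in> M" "s \<in> M" "t \<in> M" "d (f s) s < r" "d (f s) t < r"
        using f[OF st(1)] f[OF st(2)] st(3) by (auto simp: Metric_space.mball_def[OF M])
      moreover have "d s t \<le> d s (f s) + d (f s) t"
        using Metric_space.triangle[OF M] calculation by blast
      ultimately show False using Metric_space.commute[OF M, of s "f s"] by linarith
    qed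
  qed
  then have "card S = card (f ` S)" by (simp add: card_image)
  also have "\<dots> \<le> card C" using f cov(1) by (intro card_mono) auto
  finally show ?thesis .
qed

lemma maximal_pack:
  assumes M: "Metric_space M d" and A: "A \<subseteq> M" and e: "e > 0"
    and bnd: "\<And>S. S \<subseteq> A \<Longrightarrow> finite S \<Longrightarrow> sep d e S \<Longrightarrow> card S \<le> k"
  obtains S where "S \<subseteq> A" "finite S" "sep d e S" "iscover M d e A S"
proof -
  let ?P = "\<lambda>S. S \<subseteq> A \<and> finite S \<and> sep d e S"
  have "?P {}" by (simp add: sep_def)
  moreover have "\<forall>S. ?P S \<longrightarrow> card S < Suc k" using bnd by (simp add: less_Suc_eq_le)
  ultimately obtain S where S: "?P S" and mx: "\<forall>T. ?P T \<longrightarrow> card T \<le> card S"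
    using Lattices_Big.ex_has_greatest_nat[of ?P "{}" card "Suc k"] by blast
  have "A \<subseteq> (\<Union>c\<in>S. Metric_space.mball M d c e)"
  proof
    fix a assume a: "a \<in> A"
    show "a \<in> (\<Union>c\<in>S. Metric_space.mball M d c e)"
    proof (rule ccontr)
      assume na: "a \<notin> (\<Union>c\<in>S. Metric_space.mball M d c e)"
      have aM: "a \<in> M" using a A by auto
      have far: "e \<le> d s a" if "s \<in> S" for s
      proof (rule ccontr)
        assume "\<not> e \<le> d s a"
        then have "a \<in> Metric_space.mball M d s e"
          using that S aM A by (auto simp: Metric_space.mball_def[OF M])
        then show False using na that by blast
      qed
      have "a \<notin> S" using far e aM by (metis Metric_space.zero[OF M] not_le)
      have "?P (insert a S)"
        using S a far Metric_space.commute[OF M] unfolding sep_def by auto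
      then have "card (insert a S) \<le> card S" using mx by blast
      then show False using \<open>a \<notin> S\<close> S by simp
    qed
  qed
  then have "iscover M d e A S" using S A unfolding iscover_def by auto
  then show ?thesis using S that by blast
qed

lemma ereal_mult_le_helper:
  fixes x y :: ereal
  assumes "0 \<le> x" "x \<le> ereal a" "0 \<le> y" "y \<le> ereal b"
  shows "x * y \<le> ereal (a * b)"
proof -
  obtain u where u: "x = ereal u" using assms(1,2) by (cases x) auto
  obtain v where v: "y = ereal v" using assms(3,4) by (cases y) auto
  have "u * v \<le> a * b" using assms u v by (auto intro!: mult_mono)
  then show ?thesis using u v by simp
qed

lemma prod_space: "Metric_space X dX \<Longrightarrow> Metric_space Y dY \<Longrightarrow> Metric_space (X \<times> Y) (prod_dist dX dY)"
  by (simp add: Metric_space12.prod_metric Metric_space12_def)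

lemma prod_dist_ge:
  "dX a a' \<le> prod_dist dX dY (a, b) (a', b')" "dY b b' \<le> prod_dist dX dY (a, b) (a', b')"
  by (auto simp: prod_dist_def)

lemma cover_prod_lower:
  assumes X: "Metric_space X dX" and Y: "Metric_space Y dY" and A: "A \<subseteq> X" "A \<noteq> {}"
    and B: "B \<subseteq> Y" "B \<noteq> {}" and r: "r > 0"
  shows "cover_num X dX (2 * r) A * cover_num Y dY (2 * r) B
         \<le> cover_num (X \<times> Y) (prod_dist dX dY) r (A \<times> B)"
proof (cases rule: cover_num_cases[of "X \<times> Y" "prod_dist dX dY" r "A \<times> B"])
  case none then show ?thesis by simp
next
  case (opt C)
  have XY: "Metric_space (X \<times> Y) (prod_dist dX dY)" using X Y by (rule prod_space)
  have main: "card S * card T \<le> card C"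
    if S: "S \<subseteq> A" "finite S" "sep dX (2*r) S" and T: "T \<subseteq> B" "finite T" "sep dY (2*r) T" for S T
  proof -
    have "sep (prod_dist dX dY) (2*r) (S \<times> T)"
      unfolding sep_def
    proof (clarsimp)
      fix a b a' b' assume *: "a \<in> S" "b \<in> T" "a' \<in> S" "b' \<in> T" "a = a' \<longrightarrow> b \<noteq> b'"
      show "2 * r \<le> prod_dist dX dY (a, b) (a', b')"
      proof (cases "a = a'")
        case True
        then have "2*r \<le> dY b b'" using * T(3) unfolding sep_def by blast
        then show ?thesis using prod_dist_ge(2)[of dY b b' dX a a'] by linarith
      next
        case False
        then have "2*r \<le> dX a a'" using * S(3) unfolding sep_def by blast
        then show ?thesis using prod_dist_ge(1)[of dX a a' dY b b'] by linarith
      qed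
    qed
    then have "card (S \<times> T) \<le> card C"
      using pack_le_cover[OF XY opt(1), of "S \<times> T"] S T by auto
    then show ?thesis by (simp add: card_cartesian_product)
  qed
  obtain b where b: "b \<in> B" using B by auto
  obtain a where a: "a \<in> A" using A by auto
  have "sep dY (2*r) {b}" "sep dX (2*r) {a}" by (auto simp: sep_def)
  then have bndA: "card S \<le> card C" if "S \<subseteq> A" "finite S" "sep dX (2*r) S" for S
    using main[OF that, of "{b}"] b by auto
  have bndB: "card T \<le> card C" if "T \<subseteq> B" "finite T" "sep dY (2*r) T" for T
    using main[OF _ _ _ that, of "{a}"] a \<open>sep dX (2*r) {a}\<close> by auto
  have "\<exists>S0. S0 \<subseteq> A \<and> finite S0 \<and> sep dX (2*r) S0 \<and> iscover X dX (2*r) A S0"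
  proof (rule maximal_pack[OF X A(1), of "2*r" "card C"])
    show "0 < 2 * r" using r by simp
    show "card S \<le> card C" if "S \<subseteq> A" "finite S" "sep dX (2 * r) S" for S using bndA that by blast
  qed blast
  then obtain S0 where S0: "S0 \<subseteq> A" "finite S0" "sep dX (2*r) S0" "iscover X dX (2*r) A S0"
    by blast
  have "\<exists>T0. T0 \<subseteq> B \<and> finite T0 \<and> sep dY (2*r) T0 \<and> iscover Y dY (2*r) B T0"
  proof (rule maximal_pack[OF Y B(1), of "2*r" "card C"])
    show "0 < 2 * r" using r by simp
    show "card S \<le> card C" if "S \<subseteq> B" "finite S" "sep dY (2 * r) S" for S using bndB that by blast
  qed blast
  then obtain T0 where T0: "T0 \<subseteq> B" "finite T0" "sep dY (2*r) T0" "iscover Y dY (2*r) B T0"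
    by blast
  have "cover_num X dX (2 * r) A * cover_num Y dY (2 * r) B \<le> ereal (real (card S0) * real (card T0))"
    by (rule ereal_mult_le_helper[OF cover_num_nonneg cover_num_le[OF S0(4)] cover_num_nonneg cover_num_le[OF T0(4)]])
  also have "\<dots> \<le> ereal (real (card C))"
    using main[OF S0(1-3) T0(1-3)] by (simp flip: of_nat_mult)
  finally show ?thesis using opt by simp
qed

lemma cover_prod_upper:
  assumes X: "Metric_space X dX" and Y: "Metric_space Y dY" and A: "A \<noteq> {}"
    and B: "B \<noteq> {}" and r: "r > 0"
  shows "cover_num (X \<times> Y) (prod_dist dX dY) r (A \<times> B)
         \<le> cover_num X dX (r / sqrt 2) A * cover_num Y dY (r / sqrt 2) B"
proof (cases rule: cover_num_cases[of X dX "r / sqrt 2" A])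
  case none
  have "1 \<le> cover_num Y dY (r / sqrt 2) B" using B by (rule cover_num_ge1)
  then have "0 < cover_num Y dY (r / sqrt 2) B" using less_le_trans[of "0::ereal" 1] by simp
  then show ?thesis using none by auto
next
  case (opt C1)
  note o1 = opt
  show ?thesis
  proof (cases rule: cover_num_cases[of Y dY "r / sqrt 2" B])
    case none
    have "1 \<le> cover_num X dX (r / sqrt 2) A" using A by (rule cover_num_ge1)
    then have "0 < cover_num X dX (r / sqrt 2) A" using less_le_trans[of "0::ereal" 1] by simp
    then show ?thesis using none by auto
  next
    case (opt C2)
    note o2 = opt
    have XY: "Metric_space (X \<times> Y) (prod_dist dX dY)" using X Y by (rule prod_space)
    have c1: "finite C1" "C1 \<subseteq> X" "A \<subseteq> (\<Union>c\<in>C1. Metric_space.mball X dX c (r / sqrt 2))"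
      using o1(1) unfolding iscover_def by auto
    have c2: "finite C2" "C2 \<subseteq> Y" "B \<subseteq> (\<Union>c\<in>C2. Metric_space.mball Y dY c (r / sqrt 2))"
      using o2(1) unfolding iscover_def by auto
    have "A \<times> B \<subseteq> (\<Union>c\<in>C1 \<times> C2. Metric_space.mball (X \<times> Y) (prod_dist dX dY) c r)"
    proof
      fix p assume "p \<in> A \<times> B"
      then obtain a b where p: "p = (a, b)" and ab: "a \<in> A" "b \<in> B" by blast
      obtain c where c: "c \<in> C1" "a \<in> Metric_space.mball X dX c (r / sqrt 2)" using c1(3) ab by auto
      obtain e where e: "e \<in> C2" "b \<in> Metric_space.mball Y dY e (r / sqrt 2)" using c2(3) ab by auto
      have m1: "c \<in> X" "a \<in> X" "dX c a < r / sqrt 2" using c by (auto simp: Metric_space.mball_def[OF X])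
      have m2: "e \<in> Y" "b \<in> Y" "dY e b < r / sqrt 2" using e by (auto simp: Metric_space.mball_def[OF Y])
      have n1: "0 \<le> dX c a" using Metric_space.nonneg[OF X] .
      have n2: "0 \<le> dY e b" using Metric_space.nonneg[OF Y] .
      have sq2: "(r / sqrt 2)^2 = r^2 / 2" by (simp add: power_divide)
      have "(dX c a)^2 < r^2/2" using power_strict_mono[OF m1(3) n1, of 2] sq2 by simp
      moreover have "(dY e b)^2 < r^2/2" using power_strict_mono[OF m2(3) n2, of 2] sq2 by simp
      ultimately have lt: "(dX c a)^2 + (dY e b)^2 < r^2" by linarith
      have "sqrt ((dX c a)^2 + (dY e b)^2) < r"
        using real_sqrt_less_mono[OF lt] r by simp
      then have "(a, b) \<in> Metric_space.mball (X \<times> Y) (prod_dist dX dY) (c, e) r"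
        unfolding Metric_space.mball_def[OF XY] using m1 m2 by (simp add: prod_dist_def)
      then show "p \<in> (\<Union>c\<in>C1 \<times> C2. Metric_space.mball (X \<times> Y) (prod_dist dX dY) c r)"
        using c e p by blast
    qed
    then have "iscover (X \<times> Y) (prod_dist dX dY) r (A \<times> B) (C1 \<times> C2)"
      using c1 c2 unfolding iscover_def by auto
    then have "cover_num (X \<times> Y) (prod_dist dX dY) r (A \<times> B) \<le> ereal (real (card (C1 \<times> C2)))"
      by (rule cover_num_le)
    also have "\<dots> = ereal (real (card C1)) * ereal (real (card C2))"
      by (simp add: card_cartesian_product)
    finally show ?thesis using o1 o2 by simp
  qed
qed

lemma ln_ext_nonneg: "1 \<le> a \<Longrightarrow> 0 \<le> ln_ext a"
  by (cases a) (auto simp: ln_ext_def)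

lemma ln_ext_mono: "1 \<le> a \<Longrightarrow> a \<le> b \<Longrightarrow> ln_ext a \<le> ln_ext b"
  by (cases a; cases b) (auto simp: ln_ext_def)

lemma ln_ext_mult: "1 \<le> a \<Longrightarrow> 1 \<le> b \<Longrightarrow> ln_ext (a * b) = ln_ext a + ln_ext b"
  by (cases a; cases b) (auto simp: ln_ext_def ln_mult)

lemma ln_ext_add: "1 \<le> a \<Longrightarrow> 1 \<le> b \<Longrightarrow> ln_ext (a + b) \<le> max (ln_ext a) (ln_ext b) + ereal (ln 2)"
proof (cases a; cases b)
  fix u v assume ab: "1 \<le> a" "1 \<le> b" "a = ereal u" "b = ereal v"
  then have uv: "1 \<le> u" "1 \<le> v" by auto
  have "ln (u + v) \<le> ln (2 * max u v)" using uv by (intro ln_mono) auto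
  also have "\<dots> = ln 2 + max (ln u) (ln v)" using uv
    by (simp add: ln_mult max_def)
  finally show ?thesis using ab by (auto simp: ln_ext_def max_def split: if_splits)
qed (auto simp: ln_ext_def)

lemma ln_inv: "0 < (l::real) \<Longrightarrow> ln (1 / l) = - ln l"
  using ln_div[of 1 l] by simp

definition Dlo :: "(real \<Rightarrow> ereal) \<Rightarrow> ereal" where
  "Dlo g = Liminf (at_right 0) (\<lambda>l. g l / ereal (ln (1 / l)))"
definition Dup :: "(real \<Rightarrow> ereal) \<Rightarrow> ereal" where
  "Dup g = Limsup (at_right 0) (\<lambda>l. g l / ereal (ln (1 / l)))"

lemma ev_small: "eventually (\<lambda>l. 0 < l \<and> l < (1::real)) (at_right 0)"
  using eventually_at_right_real[of 0 1] by auto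

lemma ev_scale:
  assumes c: "c > 0" and ev: "eventually P (at_right (0::real))"
  shows "eventually (\<lambda>l. P (c * l)) (at_right 0)"
proof -
  obtain b where b: "b > 0" "\<And>y. y > 0 \<Longrightarrow> y < b \<Longrightarrow> P y"
    using ev unfolding eventually_at_right_field by auto
  show ?thesis unfolding eventually_at_right_field
  proof (intro exI[of _ "b / c"] conjI allI impI)
    show "0 < b / c" using b c by simp
    fix y :: real assume "0 < y" "y < b / c"
    then show "P (c * y)" using b c by (simp add: field_simps)
  qed
qed

lemma ev_log:
  assumes k: "k > 0"
  shows "eventually (\<lambda>l. B \<le> k * ln (1 / l)) (at_right (0::real))"
  unfolding eventually_at_right_field
proof (intro exI[of _ "exp (- B / k)"] conjI allI impI)
  show "0 < exp (- B / k)" by simp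
  fix y :: real assume y: "0 < y" "y < exp (- B / k)"
  then have "ln y < - B / k" by (metis ln_exp ln_less_cancel_iff exp_gt_zero)
  then have "B / k < ln (1 / y)" using y by (simp add: ln_inv)
  then show "B \<le> k * ln (1 / y)" using k by (simp add: field_simps)
qed

lemma T1:
  assumes "ereal y < Dlo g"
  shows "eventually (\<lambda>l. ereal (y * ln (1 / l)) < g l) (at_right 0)"
proof -
  have "eventually (\<lambda>l. ereal y < g l / ereal (ln (1 / l))) (at_right 0)"
    using assms unfolding Dlo_def by (rule less_LiminfD)
  then show ?thesis using ev_small
  proof eventually_elim
    case (elim l)
    then have t: "0 < ln (1 / l)" by simp
    then show ?case using elim(1) ereal_less_divide_pos[of "ereal (ln (1/l))" "ereal y" "g l"]
      by (simp add: mult.commute)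
  qed
qed

lemma T2:
  assumes "\<And>y. ereal y < A \<Longrightarrow> eventually (\<lambda>l. ereal (y * ln (1 / l)) \<le> g l) (at_right 0)"
  shows "A \<le> Dlo g"
  unfolding Dlo_def le_Liminf_iff
proof (intro allI impI)
  fix z assume "z < A"
  then obtain y where y: "z < ereal y" "ereal y < A" using ereal_dense2 by blast
  show "eventually (\<lambda>l. z < g l / ereal (ln (1 / l))) (at_right 0)"
    using assms[OF y(2)] ev_small
  proof eventually_elim
    case (elim l)
    then have t: "0 < ln (1 / l)" by simp
    have "ereal y \<le> g l / ereal (ln (1 / l))"
      using elim(1) ereal_le_divide_pos[of "ereal (ln (1/l))" "ereal y" "g l"] t
      by (simp add: mult.commute)
    then show ?case using y(1) by simp
  qed
qed

lemma T3:
  assumes "Dup g < ereal y"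
  shows "eventually (\<lambda>l. g l < ereal (y * ln (1 / l))) (at_right 0)"
proof -
  have "eventually (\<lambda>l. g l / ereal (ln (1 / l)) < ereal y) (at_right 0)"
    using assms unfolding Dup_def by (rule Limsup_lessD)
  then show ?thesis using ev_small
  proof eventually_elim
    case (elim l)
    then have t: "0 < ln (1 / l)" by simp
    then show ?case using elim(1) ereal_divide_less_pos[of "ereal (ln (1/l))" "g l" "ereal y"]
      by (simp add: mult.commute)
  qed
qed

lemma T4:
  assumes "\<And>y. C < ereal y \<Longrightarrow> eventually (\<lambda>l. g l < ereal (y * ln (1 / l))) (at_right 0)"
  shows "Dup g \<le> C"
  unfolding Dup_def Limsup_le_iff
proof (intro allI impI)
  fix z assume "C < z"
  then obtain y where y: "C < ereal y" "ereal y < z" using ereal_dense2 by blast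
  show "eventually (\<lambda>l. g l / ereal (ln (1 / l)) < z) (at_right 0)"
    using assms[OF y(1)] ev_small
  proof eventually_elim
    case (elim l)
    then have t: "0 < ln (1 / l)" by simp
    have "g l / ereal (ln (1 / l)) < ereal y"
      using elim(1) ereal_divide_less_pos[of "ereal (ln (1/l))" "g l" "ereal y"] t
      by (simp add: mult.commute)
    then show ?case using y(2) by simp
  qed
qed

lemma lo_cmp:
  assumes g2: "\<And>l. 0 \<le> g2 l" and c: "c > 0"
    and ev: "eventually (\<lambda>l. g1 l \<le> g2 (c * l) + ereal K) (at_right 0)"
  shows "Dlo g1 \<le> Dlo g2"
proof (rule T2)
  fix y assume y: "ereal y < Dlo g1"
  show "eventually (\<lambda>m. ereal (y * ln (1 / m)) \<le> g2 m) (at_right 0)"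
  proof (cases "y \<le> 0")
    case True
    show ?thesis using ev_small
    proof eventually_elim
      case (elim m)
      then have "0 < ln (1 / m)" by simp
      then have "y * ln (1 / m) \<le> 0" using True by (simp add: mult_nonpos_nonneg)
      then have "ereal (y * ln (1 / m)) \<le> 0" by simp
      then show ?case using g2[of m] by (rule order_trans)
    qed
  next
    case False
    obtain y1 where y1: "ereal y < ereal y1" "ereal y1 < Dlo g1" using ereal_dense2[OF y] by blast
    have e1: "eventually (\<lambda>l. ereal (y1 * ln (1 / l)) < g2 (c * l) + ereal K) (at_right 0)"
      using T1[OF y1(2)] ev by eventually_elim (rule less_le_trans)
    have e2: "eventually (\<lambda>m. ereal (y1 * ln (1 / ((1/c) * m))) < g2 (c * ((1/c) * m)) + ereal K) (at_right 0)"
      using ev_scale[where c="1/c", OF _ e1] c by simp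
    have yy: "y1 - y > 0" using y1 by simp
    have e3: "eventually (\<lambda>m. K - y1 * ln c \<le> (y1 - y) * ln (1 / m)) (at_right 0)"
      by (rule ev_log[OF yy])
    show ?thesis using e2 e3 ev_small
    proof eventually_elim
      case (elim m)
      have cm: "c * ((1/c) * m) = m" using c by simp
      have lnm: "ln (1 / ((1/c) * m)) = ln c + ln (1 / m)"
        using c elim(3) by (simp add: ln_inv ln_mult ln_div)
      have a: "ereal (y1 * (ln c + ln (1 / m))) < g2 m + ereal K" using elim(1) unfolding cm lnm .
      have b: "y * ln (1 / m) \<le> y1 * (ln c + ln (1 / m)) - K" using elim(2) by (simp add: algebra_simps)
      show ?case using a b g2[of m] by (cases "g2 m") auto
    qed
  qed
qed

lemma up_cmp:
  assumes c: "c > 0"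
    and ev: "eventually (\<lambda>l. g1 l \<le> g2 (c * l) + ereal K) (at_right 0)"
  shows "Dup g1 \<le> Dup g2"
proof (rule T4)
  fix y assume y: "Dup g2 < ereal y"
  obtain y0 where y0: "Dup g2 < ereal y0" "ereal y0 < ereal y" using ereal_dense2[OF y] by blast
  have e1: "eventually (\<lambda>m. g2 m < ereal (y0 * ln (1 / m))) (at_right 0)" using T3[OF y0(1)] .
  have e2: "eventually (\<lambda>l. g2 (c * l) < ereal (y0 * ln (1 / (c * l)))) (at_right 0)"
    using ev_scale[OF c e1] .
  have yy: "y - y0 > 0" using y0 by simp
  have e3: "eventually (\<lambda>l. K - y0 * ln c \<le> (y - y0) * ln (1 / l)) (at_right 0)"
    by (rule ev_log[OF yy])
  show "eventually (\<lambda>l. g1 l < ereal (y * ln (1 / l))) (at_right 0)"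
    using ev e2 e3 ev_small
  proof eventually_elim
    case (elim l)
    have lnl: "ln (1 / (c * l)) = ln (1 / l) - ln c"
      using c elim(4) by (simp add: ln_inv ln_mult)
    have a: "g2 (c * l) < ereal (y0 * (ln (1 / l) - ln c))" using elim(2) unfolding lnl .
    have b: "y0 * (ln (1 / l) - ln c) + K \<le> y * ln (1 / l)" using elim(3) by (simp add: algebra_simps)
    show ?case using elim(1) a b by (cases "g2 (c * l)"; cases "g1 l") auto
  qed
qed

lemma Limsup_add_le:
  fixes a b :: "_ \<Rightarrow> ereal"
  assumes F: "F \<noteq> bot" and a0: "eventually (\<lambda>x. 0 \<le> a x) F" and b0: "eventually (\<lambda>x. 0 \<le> b x) F"
  shows "Limsup F (\<lambda>x. a x + b x) \<le> Limsup F a + Limsup F b"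
proof -
  have La: "0 \<le> Limsup F a" using Liminf_bounded[OF a0] Liminf_le_Limsup[OF F] by (rule order_trans)
  have Lb: "0 \<le> Limsup F b" using Liminf_bounded[OF b0] Liminf_le_Limsup[OF F] by (rule order_trans)
  show ?thesis
  proof (cases "Limsup F a = \<infinity> \<or> Limsup F b = \<infinity>")
    case True
    then have s: "Limsup F a + Limsup F b = \<infinity>" using La Lb
      by (cases "Limsup F a"; cases "Limsup F b") auto
    show ?thesis by (subst s) simp
  next
    case False
    then obtain p q where p: "Limsup F a = ereal p" and q: "Limsup F b = ereal q"
      using La Lb by (cases "Limsup F a"; cases "Limsup F b") auto
    show ?thesis unfolding p q Limsup_le_iff
    proof (intro allI impI)
      fix z assume z: "ereal p + ereal q < z"
      then obtain w where w: "ereal (p + q) < ereal w" "ereal w < z" using ereal_dense2 by fastforce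
      define e where "e = (w - p - q) / 2"
      have e: "e > 0" using w unfolding e_def by simp
      have ea: "eventually (\<lambda>x. a x < ereal (p + e)) F"
        by (rule Limsup_lessD) (use p e in simp)
      have eb: "eventually (\<lambda>x. b x < ereal (q + e)) F"
        by (rule Limsup_lessD) (use q e in simp)
      show "eventually (\<lambda>x. a x + b x < z) F" using ea eb
      proof eventually_elim
        case (elim x)
        have "a x + b x < ereal (p + e + (q + e))" using elim by (cases "a x"; cases "b x") auto
        also have "p + e + (q + e) = w" unfolding e_def by simp
        finally show ?case using w(2) by simp
      qed
    qed
  qed
qed

lemma ratio_nonneg: "0 \<le> g \<Longrightarrow> 0 < (l::real) \<Longrightarrow> l < 1 \<Longrightarrow> 0 \<le> g / ereal (ln (1 / l))"
  by (simp add: ereal_le_divide_pos)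

lemma ratio_add: "0 \<le> a \<Longrightarrow> 0 \<le> b \<Longrightarrow> (a + b) / ereal t = a / ereal t + b / ereal (t::real)"
  by (simp add: divide_ereal_def ereal_left_distrib)

lemma lo_sum:
  assumes g1: "\<And>l. 0 \<le> g1 l" and g2: "\<And>l. 0 \<le> g2 l" and f: "\<And>l. 0 \<le> f l" and c: "c > 0"
    and ev: "eventually (\<lambda>l. g1 (c * l) + g2 (c * l) \<le> f l) (at_right 0)"
  shows "Dlo g1 + Dlo g2 \<le> Dlo f"
proof -
  define h1 where "h1 l = g1 (c * l)" for l
  define h2 where "h2 l = g2 (c * l)" for l
  have "Dlo g1 \<le> Dlo h1"
    by (rule lo_cmp[where c="1/c" and K=0]) (use c g1 in \<open>auto simp: h1_def\<close>)
  moreover have "Dlo g2 \<le> Dlo h2"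
    by (rule lo_cmp[where c="1/c" and K=0]) (use c g2 in \<open>auto simp: h2_def\<close>)
  moreover have "Dlo h1 + Dlo h2 \<le> Liminf (at_right 0) (\<lambda>l. h1 l / ereal (ln (1 / l)) + h2 l / ereal (ln (1 / l)))"
    unfolding Dlo_def
    by (rule Liminf_add_le) (use ev_small g1 g2 in \<open>auto simp: h1_def h2_def elim!: eventually_mono intro!: ratio_nonneg\<close>)
  moreover have "Liminf (at_right 0) (\<lambda>l. h1 l / ereal (ln (1 / l)) + h2 l / ereal (ln (1 / l)))
      = Dlo (\<lambda>l. h1 l + h2 l)"
    unfolding Dlo_def using g1 g2 by (simp add: ratio_add h1_def h2_def)
  moreover have "Dlo (\<lambda>l. h1 l + h2 l) \<le> Dlo f"
    by (rule lo_cmp[where c=1 and K=0]) (use ev f in \<open>auto simp: h1_def h2_def\<close>)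
  ultimately show ?thesis
    by (metis (no_types, lifting) add_mono order_trans)
qed

lemma up_sum:
  assumes g1: "\<And>l. 0 \<le> g1 l" and g2: "\<And>l. 0 \<le> g2 l" and c: "c > 0"
    and ev: "eventually (\<lambda>l. f l \<le> g1 (c * l) + g2 (c * l)) (at_right 0)"
  shows "Dup f \<le> Dup g1 + Dup g2"
proof -
  define h1 where "h1 l = g1 (c * l)" for l
  define h2 where "h2 l = g2 (c * l)" for l
  have "Dup h1 \<le> Dup g1"
    by (rule up_cmp[where c=c and K=0]) (use c in \<open>auto simp: h1_def\<close>)
  moreover have "Dup h2 \<le> Dup g2"
    by (rule up_cmp[where c=c and K=0]) (use c in \<open>auto simp: h2_def\<close>)
  moreover have "Limsup (at_right 0) (\<lambda>l. h1 l / ereal (ln (1 / l)) + h2 l / ereal (ln (1 / l))) \<le> Dup h1 + Dup h2"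
    unfolding Dup_def
    by (rule Limsup_add_le) (use ev_small g1 g2 in \<open>auto simp: h1_def h2_def elim!: eventually_mono intro!: ratio_nonneg\<close>)
  moreover have "Limsup (at_right 0) (\<lambda>l. h1 l / ereal (ln (1 / l)) + h2 l / ereal (ln (1 / l)))
      = Dup (\<lambda>l. h1 l + h2 l)"
    unfolding Dup_def using g1 g2 by (simp add: ratio_add h1_def h2_def)
  moreover have "Dup f \<le> Dup (\<lambda>l. h1 l + h2 l)"
    by (rule up_cmp[where c=1 and K=0]) (use ev in \<open>auto simp: h1_def h2_def\<close>)
  ultimately show ?thesis by (metis add_mono order_trans)
qed

lemma up_max:
  assumes ev: "eventually (\<lambda>l. f l \<le> max (g1 l) (g2 l) + ereal K) (at_right 0)"
  shows "Dup f \<le> max (Dup g1) (Dup g2)"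
proof -
  have "Dup f \<le> Dup (\<lambda>l. max (g1 l) (g2 l))"
    by (rule up_cmp[where c=1 and K=K]) (use ev in auto)
  also have "\<dots> \<le> max (Dup g1) (Dup g2)"
    unfolding Dup_def Limsup_le_iff
  proof (intro allI impI)
    fix z assume z: "max (Limsup (at_right 0) (\<lambda>l. g1 l / ereal (ln (1 / l))))
                         (Limsup (at_right 0) (\<lambda>l. g2 l / ereal (ln (1 / l)))) < z"
    have "eventually (\<lambda>l. g1 l / ereal (ln (1 / l)) < z) (at_right 0)"
      by (rule Limsup_lessD) (use z in simp)
    moreover have "eventually (\<lambda>l. g2 l / ereal (ln (1 / l)) < z) (at_right 0)"
      by (rule Limsup_lessD) (use z in simp)
    ultimately show "eventually (\<lambda>l. max (g1 l) (g2 l) / ereal (ln (1 / l)) < z) (at_right 0)"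
      by eventually_elim (simp add: max_def)
  qed
  finally show ?thesis .
qed

definition Lf :: "'a set \<Rightarrow> ('a \<Rightarrow> 'a \<Rightarrow> real) \<Rightarrow> 'a \<Rightarrow> real \<Rightarrow> real \<Rightarrow> ereal" where
  "Lf M d z lam r = ln_ext (cover_num M d (lam * r) (Metric_space.mcball M d z r))"
definition Gf :: "'a set \<Rightarrow> ('a \<Rightarrow> 'a \<Rightarrow> real) \<Rightarrow> 'a \<Rightarrow> real \<Rightarrow> ereal" where
  "Gf M d z lam = Liminf (at_right 0) (Lf M d z lam)"
definition Hf :: "'a set \<Rightarrow> ('a \<Rightarrow> 'a \<Rightarrow> real) \<Rightarrow> 'a \<Rightarrow> real \<Rightarrow> ereal" where
  "Hf M d z lam = Limsup (at_right 0) (Lf M d z lam)"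

lemma mcball_ne: "Metric_space M d \<Longrightarrow> z \<in> M \<Longrightarrow> 0 \<le> r \<Longrightarrow> Metric_space.mcball M d z r \<noteq> {}"
  using Metric_space.centre_in_mcball_iff by fastforce

lemma cn_ge1: "Metric_space M d \<Longrightarrow> z \<in> M \<Longrightarrow> 0 \<le> r \<Longrightarrow> 1 \<le> cover_num M d s (Metric_space.mcball M d z r)"
  by (rule cover_num_ge1) (rule mcball_ne)

lemma Lf_nonneg: "Metric_space M d \<Longrightarrow> z \<in> M \<Longrightarrow> 0 \<le> r \<Longrightarrow> 0 \<le> Lf M d z lam r"
  unfolding Lf_def by (intro ln_ext_nonneg cn_ge1)

lemma ev_pos: "eventually (\<lambda>r. 0 < (r::real)) (at_right 0)"
  by (rule eventually_at_right_less)

lemma Gf_nonneg: "Metric_space M d \<Longrightarrow> z \<in> M \<Longrightarrow> 0 \<le> Gf M d z lam"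
  unfolding Gf_def by (rule Liminf_bounded) (use ev_pos in \<open>auto elim!: eventually_mono intro: Lf_nonneg\<close>)

lemma Hf_nonneg: "Metric_space M d \<Longrightarrow> z \<in> M \<Longrightarrow> 0 \<le> Hf M d z lam"
proof -
  assume a: "Metric_space M d" "z \<in> M"
  have "Gf M d z lam \<le> Hf M d z lam" unfolding Gf_def Hf_def by (rule Liminf_le_Limsup) simp
  then show ?thesis using Gf_nonneg[OF a] by (rule order_trans[rotated])
qed

lemma lower_eq: "lower_tdim M d z = Dlo (Gf M d z)"
  unfolding lower_tdim_def Dlo_def
proof (rule Liminf_eq)
  show "eventually (\<lambda>lam. Liminf (at_right 0) (tdim_ratio M d z lam) = Gf M d z lam / ereal (ln (1 / lam))) (at_right 0)"
    using ev_small
  proof eventually_elim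
    case (elim lam)
    define t where "t = ln (1 / lam)"
    have t: "t > 0" using elim unfolding t_def by simp
    have "tdim_ratio M d z lam = (\<lambda>r. Lf M d z lam r * ereal (inverse t))"
      using t by (auto simp: fun_eq_iff tdim_ratio_def Lf_def t_def divide_ereal_def)
    then have "Liminf (at_right 0) (tdim_ratio M d z lam) = Gf M d z lam * ereal (inverse t)"
      unfolding Gf_def using t by (simp add: Liminf_ereal_mult_right)
    then show ?case using t by (simp add: t_def divide_ereal_def)
  qed
qed

lemma upper_eq: "upper_tdim M d z = Dup (Hf M d z)"
  unfolding upper_tdim_def Dup_def
proof (rule Limsup_eq)
  show "eventually (\<lambda>lam. Limsup (at_right 0) (tdim_ratio M d z lam) = Hf M d z lam / ereal (ln (1 / lam))) (at_right 0)"
    using ev_small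
  proof eventually_elim
    case (elim lam)
    define t where "t = ln (1 / lam)"
    have t: "t > 0" using elim unfolding t_def by simp
    have "tdim_ratio M d z lam = (\<lambda>r. Lf M d z lam r * ereal (inverse t))"
      using t by (auto simp: fun_eq_iff tdim_ratio_def Lf_def t_def divide_ereal_def)
    then have "Limsup (at_right 0) (tdim_ratio M d z lam) = Hf M d z lam * ereal (inverse t)"
      unfolding Hf_def using t by (simp add: Limsup_ereal_mult_right)
    then show ?case using t by (simp add: t_def divide_ereal_def)
  qed
qed

lemma part1_le:
  assumes X: "Metric_space X d" and Y: "Y \<subseteq> X" and x: "x \<in> Y"
  shows "lower_tdim Y d x \<le> lower_tdim X d x \<and> upper_tdim Y d x \<le> upper_tdim X d x"
proof -
  have MY: "Metric_space Y d" using Metric_space.subspace[OF X Y] .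
  have xX: "x \<in> X" using x Y by auto
  have pt: "Lf Y d x lam r \<le> Lf X d x ((1/2) * lam) r" if "r > 0" for lam r
  proof -
    have eq: "Metric_space.mcball Y d x r = Metric_space.mcball X d x r \<inter> Y"
      by (rule mcball_sub_iff[OF X Y x])
    define s where "s = ((1/2) * lam) * r"
    have s2: "lam * r = 2 * s" unfolding s_def by simp
    have "cover_num Y d (lam * r) (Metric_space.mcball Y d x r) \<le> cover_num X d s (Metric_space.mcball X d x r)"
      unfolding eq s2 by (rule cover_sub[OF X Y])
    then show ?thesis unfolding Lf_def s_def
      by (intro ln_ext_mono cn_ge1[OF MY x]) (use that in auto)
  qed
  have gp: "Gf Y d x lam \<le> Gf X d x ((1/2) * lam) + ereal 0" for lam
    unfolding Gf_def by simp (rule Liminf_mono, use ev_pos pt in \<open>auto elim!: eventually_mono\<close>)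
  have hp: "Hf Y d x lam \<le> Hf X d x ((1/2) * lam) + ereal 0" for lam
    unfolding Hf_def by simp (rule Limsup_mono, use ev_pos pt in \<open>auto elim!: eventually_mono\<close>)
  have "Dlo (Gf Y d x) \<le> Dlo (Gf X d x)"
    by (rule lo_cmp[where c="1/2" and K=0]) (use Gf_nonneg[OF X xX] gp in auto)
  moreover have "Dup (Hf Y d x) \<le> Dup (Hf X d x)"
    by (rule up_cmp[where c="1/2" and K=0]) (use hp in auto)
  ultimately show ?thesis by (simp add: lower_eq upper_eq)
qed

lemma part1_ge:
  assumes X: "Metric_space X d" and Y: "Y \<subseteq> X" and x: "x \<in> Y"
    and R0: "R0 > 0" "Metric_space.mball X d x R0 \<subseteq> Y"
  shows "lower_tdim X d x \<le> lower_tdim Y d x \<and> upper_tdim X d x \<le> upper_tdim Y d x"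
proof -
  have MY: "Metric_space Y d" using Metric_space.subspace[OF X Y] .
  have xX: "x \<in> X" using x Y by auto
  have pt: "Lf X d x lam r \<le> Lf Y d x lam r" if "0 < r" "r < R0" for lam r
  proof -
    have "Metric_space.mcball X d x r \<subseteq> Y"
    proof
      fix y assume "y \<in> Metric_space.mcball X d x r"
      then have "y \<in> Metric_space.mball X d x R0"
        using that by (auto simp: Metric_space.mcball_def[OF X] Metric_space.mball_def[OF X])
      then show "y \<in> Y" using R0 by auto
    qed
    then have eq: "Metric_space.mcball Y d x r = Metric_space.mcball X d x r"
      using mcball_sub_iff[OF X Y x] by auto
    have "cover_num X d (lam * r) (Metric_space.mcball X d x r) \<le> cover_num Y d (lam * r) (Metric_space.mcball Y d x r)"
      unfolding eq by (rule cover_sup[OF X Y])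
    then show ?thesis unfolding Lf_def
      by (intro ln_ext_mono cn_ge1[OF X xX]) (use that in auto)
  qed
  have ev: "eventually (\<lambda>r. 0 < r \<and> r < R0) (at_right 0)"
    using eventually_at_right_real[OF R0(1)] by auto
  have gp: "Gf X d x lam \<le> Gf Y d x (1 * lam) + ereal 0" for lam
    unfolding Gf_def by simp (rule Liminf_mono, use ev pt in \<open>auto elim!: eventually_mono\<close>)
  have hp: "Hf X d x lam \<le> Hf Y d x (1 * lam) + ereal 0" for lam
    unfolding Hf_def by simp (rule Limsup_mono, use ev pt in \<open>auto elim!: eventually_mono\<close>)
  have "Dlo (Gf X d x) \<le> Dlo (Gf Y d x)"
    by (rule lo_cmp[where c=1 and K=0]) (use Gf_nonneg[OF MY x] gp in auto)
  moreover have "Dup (Hf X d x) \<le> Dup (Hf Y d x)"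
    by (rule up_cmp[where c=1 and K=0]) (use hp in auto)
  ultimately show ?thesis by (simp add: lower_eq upper_eq)
qed

lemma Limsup_max_le:
  fixes f g :: "_ \<Rightarrow> ereal"
  shows "Limsup F (\<lambda>x. max (f x) (g x)) \<le> max (Limsup F f) (Limsup F g)"
  unfolding Limsup_le_iff
proof (intro allI impI)
  fix z assume z: "max (Limsup F f) (Limsup F g) < z"
  have "eventually (\<lambda>x. f x < z) F" by (rule Limsup_lessD) (use z in simp)
  moreover have "eventually (\<lambda>x. g x < z) F" by (rule Limsup_lessD) (use z in simp)
  ultimately show "eventually (\<lambda>x. max (f x) (g x) < z) F" by eventually_elim simp
qed

lemma part2:
  assumes X: "Metric_space X d" and X1: "X1 \<subseteq> X" and X2: "X2 \<subseteq> X" and x: "x \<in> X1 \<inter> X2"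
  shows "max (lower_tdim X1 d x) (lower_tdim X2 d x) \<le> lower_tdim (X1 \<union> X2) d x \<and>
         upper_tdim (X1 \<union> X2) d x = max (upper_tdim X1 d x) (upper_tdim X2 d x)"
proof -
  let ?U = "X1 \<union> X2"
  have U: "?U \<subseteq> X" using X1 X2 by auto
  have MU: "Metric_space ?U d" using Metric_space.subspace[OF X U] .
  have M1: "Metric_space X1 d" using Metric_space.subspace[OF X X1] .
  have M2: "Metric_space X2 d" using Metric_space.subspace[OF X X2] .
  have xU: "x \<in> ?U" and x1: "x \<in> X1" and x2: "x \<in> X2" using x by auto
  have a1: "lower_tdim X1 d x \<le> lower_tdim ?U d x \<and> upper_tdim X1 d x \<le> upper_tdim ?U d x"
    by (rule part1_le[OF MU _ x1]) auto
  have a2: "lower_tdim X2 d x \<le> lower_tdim ?U d x \<and> upper_tdim X2 d x \<le> upper_tdim ?U d x"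
    by (rule part1_le[OF MU _ x2]) auto
  have pt: "Lf ?U d x lam r \<le> max (Lf X1 d x lam r) (Lf X2 d x lam r) + ereal (ln 2)" if r: "r > 0" for lam r
  proof -
    have eq: "Metric_space.mcball ?U d x r = Metric_space.mcball X1 d x r \<union> Metric_space.mcball X2 d x r"
      using mcball_sub_iff[OF X U xU] mcball_sub_iff[OF X X1 x1] mcball_sub_iff[OF X X2 x2] by auto
    have "cover_num ?U d (lam * r) (Metric_space.mcball ?U d x r)
          \<le> cover_num X1 d (lam * r) (Metric_space.mcball X1 d x r) + cover_num X2 d (lam * r) (Metric_space.mcball X2 d x r)"
      unfolding eq by (rule cover_union[OF MU]) auto
    then have "Lf ?U d x lam r \<le> ln_ext (cover_num X1 d (lam * r) (Metric_space.mcball X1 d x r) + cover_num X2 d (lam * r) (Metric_space.mcball X2 d x r))"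
      unfolding Lf_def by (intro ln_ext_mono cn_ge1[OF MU xU]) (use r in auto)
    also have "\<dots> \<le> max (Lf X1 d x lam r) (Lf X2 d x lam r) + ereal (ln 2)"
      unfolding Lf_def by (intro ln_ext_add cn_ge1[OF M1 x1] cn_ge1[OF M2 x2]) (use r in auto)
    finally show ?thesis .
  qed
  have hp: "Hf ?U d x lam \<le> max (Hf X1 d x lam) (Hf X2 d x lam) + ereal (ln 2)" for lam
  proof -
    have "Hf ?U d x lam \<le> Limsup (at_right 0) (\<lambda>r. max (Lf X1 d x lam r) (Lf X2 d x lam r) + ereal (ln 2))"
      unfolding Hf_def by (rule Limsup_mono) (use ev_pos pt in \<open>auto elim!: eventually_mono\<close>)
    also have "\<dots> = Limsup (at_right 0) (\<lambda>r. max (Lf X1 d x lam r) (Lf X2 d x lam r)) + ereal (ln 2)"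
      by (rule Limsup_add_ereal_right) auto
    also have "\<dots> \<le> max (Hf X1 d x lam) (Hf X2 d x lam) + ereal (ln 2)"
      unfolding Hf_def by (intro add_right_mono Limsup_max_le)
    finally show ?thesis .
  qed
  have "Dup (Hf ?U d x) \<le> max (Dup (Hf X1 d x)) (Dup (Hf X2 d x))"
    by (rule up_max[where K="ln 2"]) (use hp in auto)
  then have "upper_tdim ?U d x \<le> max (upper_tdim X1 d x) (upper_tdim X2 d x)"
    by (simp add: upper_eq)
  then show ?thesis using a1 a2 by (auto intro: antisym)
qed

lemma r_scale_Liminf:
  fixes f :: "real \<Rightarrow> ereal"
  assumes k: "k > 0"
  shows "Liminf (at_right 0) (\<lambda>r. f (k * r)) = Liminf (at_right 0) f"
proof -
  have "inj ((*) k)" using k by (auto intro: injI)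
  then have "Liminf (filtermap ((*) k) (at_right 0)) f = Liminf (at_right 0) (\<lambda>r. f (k * r))"
    by (rule Liminf_filtermap_eq)
  moreover have "filtermap ((*) k) (at_right 0) = at_right (0::real)"
    using filtermap_times_pos_at_right[OF k, of 0] by simp
  ultimately show ?thesis by simp
qed

lemma ereal_one_le_mult: "1 \<le> a \<Longrightarrow> 1 \<le> b \<Longrightarrow> 1 \<le> a * (b::ereal)"
  by (cases a; cases b) (auto intro: order_trans[OF _ mult_mono[of 1 _ 1, simplified]])

lemma part3:
  assumes MX: "Metric_space X dX" and MY: "Metric_space Y dY" and x: "x \<in> X" and y: "y \<in> Y"
  shows "lower_tdim X dX x + lower_tdim Y dY y \<le> lower_tdim (X \<times> Y) (prod_dist dX dY) (x, y) \<and>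
         upper_tdim (X \<times> Y) (prod_dist dX dY) (x, y) \<le> upper_tdim X dX x + upper_tdim Y dY y"
proof -
  let ?P = "X \<times> Y" and ?pd = "prod_dist dX dY"
  have MP: "Metric_space ?P ?pd" using MX MY by (rule prod_space)
  have xy: "(x, y) \<in> ?P" using x y by auto
  define c where "c = 2 * sqrt 2"
  define k where "k = 1 / sqrt (2::real)"
  have c: "c > 0" and k: "k > 0" unfolding c_def k_def by auto
  have ck: "c * k = 2" unfolding c_def k_def by simp
  have kk: "(k * r)^2 = r^2 / 2" for r unfolding k_def by (simp add: power_mult_distrib power_divide)
  have ptlo: "Lf X dX x (c * lam) (k * r) + Lf Y dY y (c * lam) (k * r) \<le> Lf ?P ?pd (x, y) lam r"
    if r: "r > 0" and lam: "lam > 0" for lam r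
  proof -
    let ?A = "Metric_space.mcball X dX x (k * r)" and ?B = "Metric_space.mcball Y dY y (k * r)"
    have A: "?A \<subseteq> X" "?A \<noteq> {}" using mcball_ne[OF MX x] k r by (auto simp: Metric_space.mcball_def[OF MX])
    have B: "?B \<subseteq> Y" "?B \<noteq> {}" using mcball_ne[OF MY y] k r by (auto simp: Metric_space.mcball_def[OF MY])
    have rad: "(c * lam) * (k * r) = 2 * (lam * r)" using ck by (simp add: algebra_simps)
    have sub: "?A \<times> ?B \<subseteq> Metric_space.mcball ?P ?pd (x, y) r"
    proof clarify
      fix a b assume ab: "a \<in> ?A" "b \<in> ?B"
      have m1: "a \<in> X" "dX x a \<le> k * r" using ab by (auto simp: Metric_space.mcball_def[OF MX])
      have m2: "b \<in> Y" "dY y b \<le> k * r" using ab by (auto simp: Metric_space.mcball_def[OF MY])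
      have "(dX x a)^2 \<le> r^2 / 2" using power_mono[OF m1(2) Metric_space.nonneg[OF MX], of 2] kk by simp
      moreover have "(dY y b)^2 \<le> r^2 / 2" using power_mono[OF m2(2) Metric_space.nonneg[OF MY], of 2] kk by simp
      ultimately have lt: "(dX x a)^2 + (dY y b)^2 \<le> r^2" by linarith
      have "sqrt ((dX x a)^2 + (dY y b)^2) \<le> r"
        using real_sqrt_le_mono[OF lt] r by simp
      then show "(a, b) \<in> Metric_space.mcball ?P ?pd (x, y) r"
        unfolding Metric_space.mcball_def[OF MP] using m1 m2 x y by (simp add: prod_dist_def)
    qed
    have lr: "lam * r > 0" using lam r by simp
    have "cover_num X dX ((c * lam) * (k * r)) ?A * cover_num Y dY ((c * lam) * (k * r)) ?B
          \<le> cover_num ?P ?pd (lam * r) (?A \<times> ?B)"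
      unfolding rad by (rule cover_prod_lower[OF MX MY A B lr])
    also have "\<dots> \<le> cover_num ?P ?pd (lam * r) (Metric_space.mcball ?P ?pd (x, y) r)"
      by (rule cover_num_mono_set[OF sub])
    finally have le: "cover_num X dX ((c * lam) * (k * r)) ?A * cover_num Y dY ((c * lam) * (k * r)) ?B
          \<le> cover_num ?P ?pd (lam * r) (Metric_space.mcball ?P ?pd (x, y) r)" .
    have g1: "1 \<le> cover_num X dX ((c * lam) * (k * r)) ?A" using cn_ge1[OF MX x] k r by simp
    have g2: "1 \<le> cover_num Y dY ((c * lam) * (k * r)) ?B" using cn_ge1[OF MY y] k r by simp
    have "Lf X dX x (c * lam) (k * r) + Lf Y dY y (c * lam) (k * r)
          = ln_ext (cover_num X dX ((c * lam) * (k * r)) ?A * cover_num Y dY ((c * lam) * (k * r)) ?B)"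
      unfolding Lf_def by (rule ln_ext_mult[OF g1 g2, symmetric])
    also have "\<dots> \<le> Lf ?P ?pd (x, y) lam r"
      unfolding Lf_def by (rule ln_ext_mono[OF ereal_one_le_mult[OF g1 g2] le])
    finally show ?thesis .
  qed
  have gp: "Gf X dX x (c * lam) + Gf Y dY y (c * lam) \<le> Gf ?P ?pd (x, y) lam" if lam: "lam > 0" for lam
  proof -
    have "Gf X dX x (c * lam) + Gf Y dY y (c * lam)
        = Liminf (at_right 0) (\<lambda>r. Lf X dX x (c * lam) (k * r)) + Liminf (at_right 0) (\<lambda>r. Lf Y dY y (c * lam) (k * r))"
      unfolding Gf_def using r_scale_Liminf[OF k] by simp
    also have "\<dots> \<le> Liminf (at_right 0) (\<lambda>r. Lf X dX x (c * lam) (k * r) + Lf Y dY y (c * lam) (k * r))"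
      by (rule Liminf_add_le) (use ev_pos k in \<open>auto elim!: eventually_mono intro!: Lf_nonneg MX MY x y\<close>)
    also have "\<dots> \<le> Gf ?P ?pd (x, y) lam"
      unfolding Gf_def by (rule Liminf_mono) (use ev_pos ptlo lam in \<open>auto elim!: eventually_mono\<close>)
    finally show ?thesis .
  qed
  have "Dlo (Gf X dX x) + Dlo (Gf Y dY y) \<le> Dlo (Gf ?P ?pd (x, y))"
    by (rule lo_sum[OF Gf_nonneg[OF MX x] Gf_nonneg[OF MY y] Gf_nonneg[OF MP xy] c])
       (use ev_pos gp in \<open>auto elim!: eventually_mono\<close>)
  moreover
  have ptup: "Lf ?P ?pd (x, y) lam r \<le> Lf X dX x (k * lam) r + Lf Y dY y (k * lam) r"
    if r: "r > 0" and lam: "lam > 0" for lam r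
  proof -
    let ?A = "Metric_space.mcball X dX x r" and ?B = "Metric_space.mcball Y dY y r"
    have A: "?A \<noteq> {}" using mcball_ne[OF MX x] r by auto
    have B: "?B \<noteq> {}" using mcball_ne[OF MY y] r by auto
    have rad: "(k * lam) * r = (lam * r) / sqrt 2" unfolding k_def by simp
    have sub: "Metric_space.mcball ?P ?pd (x, y) r \<subseteq> ?A \<times> ?B"
    proof clarify
      fix a b assume ab: "(a, b) \<in> Metric_space.mcball ?P ?pd (x, y) r"
      then have "a \<in> X" "b \<in> Y" "?pd (x, y) (a, b) \<le> r"
        by (auto simp: Metric_space.mcball_def[OF MP])
      then show "a \<in> ?A \<and> b \<in> ?B"
        using prod_dist_ge(1)[of dX x a dY y b] prod_dist_ge(2)[of dY y b dX x a] x y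
        by (auto simp: Metric_space.mcball_def[OF MX] Metric_space.mcball_def[OF MY])
    qed
    have lr: "lam * r > 0" using lam r by simp
    have "cover_num ?P ?pd (lam * r) (Metric_space.mcball ?P ?pd (x, y) r) \<le> cover_num ?P ?pd (lam * r) (?A \<times> ?B)"
      by (rule cover_num_mono_set[OF sub])
    also have "\<dots> \<le> cover_num X dX ((k * lam) * r) ?A * cover_num Y dY ((k * lam) * r) ?B"
      unfolding rad by (rule cover_prod_upper[OF MX MY A B lr])
    finally have le: "cover_num ?P ?pd (lam * r) (Metric_space.mcball ?P ?pd (x, y) r)
        \<le> cover_num X dX ((k * lam) * r) ?A * cover_num Y dY ((k * lam) * r) ?B" .
    have g0: "1 \<le> cover_num ?P ?pd (lam * r) (Metric_space.mcball ?P ?pd (x, y) r)" using cn_ge1[OF MP xy] r by simp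
    have g1: "1 \<le> cover_num X dX ((k * lam) * r) ?A" using cn_ge1[OF MX x] r by simp
    have g2: "1 \<le> cover_num Y dY ((k * lam) * r) ?B" using cn_ge1[OF MY y] r by simp
    have "Lf ?P ?pd (x, y) lam r \<le> ln_ext (cover_num X dX ((k * lam) * r) ?A * cover_num Y dY ((k * lam) * r) ?B)"
      unfolding Lf_def by (rule ln_ext_mono[OF g0 le])
    also have "\<dots> = Lf X dX x (k * lam) r + Lf Y dY y (k * lam) r"
      unfolding Lf_def by (rule ln_ext_mult[OF g1 g2])
    finally show ?thesis .
  qed
  have hp: "Hf ?P ?pd (x, y) lam \<le> Hf X dX x (k * lam) + Hf Y dY y (k * lam)" if lam: "lam > 0" for lam
  proof -
    have "Hf ?P ?pd (x, y) lam \<le> Limsup (at_right 0) (\<lambda>r. Lf X dX x (k * lam) r + Lf Y dY y (k * lam) r)"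
      unfolding Hf_def by (rule Limsup_mono) (use ev_pos ptup lam in \<open>auto elim!: eventually_mono\<close>)
    also have "\<dots> \<le> Hf X dX x (k * lam) + Hf Y dY y (k * lam)"
      unfolding Hf_def
      by (rule Limsup_add_le) (use ev_pos in \<open>auto elim!: eventually_mono intro!: Lf_nonneg MX MY x y\<close>)
    finally show ?thesis .
  qed
  have "Dup (Hf ?P ?pd (x, y)) \<le> Dup (Hf X dX x) + Dup (Hf Y dY y)"
    by (rule up_sum[OF Hf_nonneg[OF MX x] Hf_nonneg[OF MY y] k])
       (use ev_pos hp in \<open>auto elim!: eventually_mono\<close>)
  ultimately show ?thesis by (simp add: lower_eq upper_eq)
qed

theorem proposition3p6:
  shows
  "(\<forall>(X::'a set) d Y x. Metric_space X d \<and> Y \<subseteq> X \<and> x \<in> Y \<longrightarrow>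
        lower_tdim Y d x \<le> lower_tdim X d x \<and> upper_tdim Y d x \<le> upper_tdim X d x \<and>
        ((\<exists>R0>0. Metric_space.mball X d x R0 \<subseteq> Y) \<longrightarrow>
           lower_tdim Y d x = lower_tdim X d x \<and> upper_tdim Y d x = upper_tdim X d x))
   \<and> (\<forall>(X::'a set) d X1 X2 x. Metric_space X d \<and> X1 \<subseteq> X \<and> X2 \<subseteq> X \<and> x \<in> X1 \<inter> X2 \<longrightarrow>
        lower_tdim (X1 \<union> X2) d x \<ge> max (lower_tdim X1 d x) (lower_tdim X2 d x) \<and>
        upper_tdim (X1 \<union> X2) d x = max (upper_tdim X1 d x) (upper_tdim X2 d x))
   \<and> (\<forall>(X::'a set) dX (Y::'b set) dY x y.
        Metric_space X dX \<and> Metric_space Y dY \<and> x \<in> X \<and> y \<in> Y \<longrightarrow>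
        lower_tdim (X \<times> Y) (prod_dist dX dY) (x, y) \<ge> lower_tdim X dX x + lower_tdim Y dY y \<and>
        upper_tdim (X \<times> Y) (prod_dist dX dY) (x, y) \<le> upper_tdim X dX x + upper_tdim Y dY y)"
  proof -
  have P1: "\<forall>(X::'a set) d Y x. Metric_space X d \<and> Y \<subseteq> X \<and> x \<in> Y \<longrightarrow>
        lower_tdim Y d x \<le> lower_tdim X d x \<and> upper_tdim Y d x \<le> upper_tdim X d x \<and>
        ((\<exists>R0>0. Metric_space.mball X d x R0 \<subseteq> Y) \<longrightarrow>
           lower_tdim Y d x = lower_tdim X d x \<and> upper_tdim Y d x = upper_tdim X d x)"
  proof (intro allI impI)
    fix X :: "'a set" and d Y x
    assume a: "Metric_space X d \<and> Y \<subseteq> X \<and> x \<in> Y"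
    have le: "lower_tdim Y d x \<le> lower_tdim X d x \<and> upper_tdim Y d x \<le> upper_tdim X d x"
      using a by (intro part1_le) auto
    have ge: "lower_tdim Y d x = lower_tdim X d x \<and> upper_tdim Y d x = upper_tdim X d x"
      if ex: "\<exists>R0>0. Metric_space.mball X d x R0 \<subseteq> Y"
    proof -
      obtain R0 where "R0 > 0" "Metric_space.mball X d x R0 \<subseteq> Y" using ex by blast
      then have "lower_tdim X d x \<le> lower_tdim Y d x \<and> upper_tdim X d x \<le> upper_tdim Y d x"
        using a by (intro part1_ge[of X d Y x R0]) auto
      then show ?thesis using le by (auto intro: antisym)
    qed
    show "lower_tdim Y d x \<le> lower_tdim X d x \<and> upper_tdim Y d x \<le> upper_tdim X d x \<and>
        ((\<exists>R0>0. Metric_space.mball X d x R0 \<subseteq> Y) \<longrightarrow>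
           lower_tdim Y d x = lower_tdim X d x \<and> upper_tdim Y d x = upper_tdim X d x)"
      using le ge by (intro conjI impI) auto
  qed
  have P2: "\<forall>(X::'a set) d X1 X2 x. Metric_space X d \<and> X1 \<subseteq> X \<and> X2 \<subseteq> X \<and> x \<in> X1 \<inter> X2 \<longrightarrow>
        lower_tdim (X1 \<union> X2) d x \<ge> max (lower_tdim X1 d x) (lower_tdim X2 d x) \<and>
        upper_tdim (X1 \<union> X2) d x = max (upper_tdim X1 d x) (upper_tdim X2 d x)"
  proof (intro allI impI)
    fix X :: "'a set" and d X1 X2 x
    assume "Metric_space X d \<and> X1 \<subseteq> X \<and> X2 \<subseteq> X \<and> x \<in> X1 \<inter> X2"
    then show "lower_tdim (X1 \<union> X2) d x \<ge> max (lower_tdim X1 d x) (lower_tdim X2 d x) \<and>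
        upper_tdim (X1 \<union> X2) d x = max (upper_tdim X1 d x) (upper_tdim X2 d x)"
      by (intro part2) auto
  qed
  have P3: "\<forall>(X::'a set) dX (Y::'b set) dY x y.
        Metric_space X dX \<and> Metric_space Y dY \<and> x \<in> X \<and> y \<in> Y \<longrightarrow>
        lower_tdim (X \<times> Y) (prod_dist dX dY) (x, y) \<ge> lower_tdim X dX x + lower_tdim Y dY y \<and>
        upper_tdim (X \<times> Y) (prod_dist dX dY) (x, y) \<le> upper_tdim X dX x + upper_tdim Y dY y"
  proof (intro allI impI)
    fix X :: "'a set" and dX and Y :: "'b set" and dY x y
    assume "Metric_space X dX \<and> Metric_space Y dY \<and> x \<in> X \<and> y \<in> Y"
    then show "lower_tdim (X \<times> Y) (prod_dist dX dY) (x, y) \<ge> lower_tdim X dX x + lower_tdim Y dY y \<and>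
        upper_tdim (X \<times> Y) (prod_dist dX dY) (x, y) \<le> upper_tdim X dX x + upper_tdim Y dY y"
      by (intro part3) auto
  qed
  show ?thesis by (intro conjI P1 P2 P3)
qed

end
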